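(* Let $[\pi]$ be any vincular cyclic pattern of length 3 with exactly one vinculum, i.e. $[\pi]$ is one of $[\overline{12}3],[\overline{21}3],[\overline{23}1],[\overline{32}1],[\overline{13}2],[\overline{31}2]$. Then $\left|\mathrm{Av}_n[\pi]\right|=1$ for all $n\ge 1$.
   Context: For $\sigma=\sigma_1\cdots\sigma_n\in S_n$, the cyclic permutation $[\sigma]$ is the set of all rotations $\sigma_k\cdots\sigma_n\sigma_1\cdots\sigma_{k-1}$ of $\sigma$; $[S_n]$ denotes the set of cyclic permutations of length $n$. A vincular pattern is a permutation $\pi\in S_k$ in which some pairs of adjacent positions are joined by an overline (a vinculum). A linear permutation $\tau$ contains the vincular pattern $\pi$ if $\tau$ has a subsequence order-isomorphic to $\pi$ in which, for every pair of positions of $\pi$ joined by a vinculum, the corresponding entries are adjacent in $\tau$. A cyclic permutation $[\sigma]$ contains $[\pi]$ if some rotation of $\sigma$ contains $\pi$; otherwise it avoids $[\pi]$. $\mathrm{Av}_n[\pi]$ is the set of $[\sigma]\in[S_n]$ avoiding $[\pi]$. *)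

theory Defs
  imports Main
begin

definition perms :: "nat \<Rightarrow> nat list set" where
  "perms n = {\<sigma>. distinct \<sigma> \<and> set \<sigma> = {1..n}}"

definition cyc :: "nat list \<Rightarrow> nat list set" where
  "cyc \<sigma> = {rotate k \<sigma> | k. True}"

definition cyc_perms :: "nat \<Rightarrow> nat list set set" where
  "cyc_perms n = cyc ` perms n"

text \<open>A vincular pattern is a pattern pi (a list) together with a set V of
  0-based positions i such that positions i and i+1 are joined by a vinculum.
  tau contains (pi,V) if there is an occurrence, given by strictly increasing
  positions f 0 < ... < f (k-1) in tau, order-isomorphic to pi, such that
  for every vinculum i the entries at f i and f (i+1) are adjacent in tau.\<close>
definition vcontains :: "nat list \<Rightarrow> nat list \<Rightarrow> nat set \<Rightarrow> bool" where
  "vcontains \<tau> \<pi> V \<longleftrightarrow>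
     (\<exists>f. strict_mono_on {..<length \<pi>} f
        \<and> (\<forall>i<length \<pi>. f i < length \<tau>)
        \<and> (\<forall>i<length \<pi>. \<forall>j<length \<pi>. (\<tau> ! f i < \<tau> ! f j) \<longleftrightarrow> (\<pi> ! i < \<pi> ! j))
        \<and> (\<forall>i\<in>V. Suc i < length \<pi> \<longrightarrow> f (Suc i) = Suc (f i)))"

definition cyc_contains :: "nat list set \<Rightarrow> nat list \<Rightarrow> nat set \<Rightarrow> bool" where
  "cyc_contains C \<pi> V \<longleftrightarrow> (\<exists>\<tau>\<in>C. vcontains \<tau> \<pi> V)"

definition Av :: "nat \<Rightarrow> nat list \<Rightarrow> nat set \<Rightarrow> nat list set set" where
  "Av n \<pi> V = {C \<in> cyc_perms n. \<not> cyc_contains C \<pi> V}"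

end

theory Submission
  imports Defs
begin

declare upt_Suc[simp del]

definition ord3 :: "nat list \<Rightarrow> nat \<Rightarrow> nat \<Rightarrow> nat \<Rightarrow> bool" where
  "ord3 \<pi> x y z \<longleftrightarrow> (\<forall>i<3. \<forall>j<3. ([x,y,z]!i < [x,y,z]!j \<longleftrightarrow> \<pi>!i < \<pi>!j))"

lemma all3: "(\<forall>i<(3::nat). P i) \<longleftrightarrow> P 0 \<and> P 1 \<and> P 2"
  by (auto simp: numeral_3_eq_3 numeral_2_eq_2 less_Suc_eq)

lemma ord3_123: "ord3 [1,2,3] x y z \<longleftrightarrow> x < y \<and> y < z"
  unfolding ord3_def all3 by auto
lemma ord3_213: "ord3 [2,1,3] x y z \<longleftrightarrow> y < x \<and> x < z"
  unfolding ord3_def all3 by auto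
lemma ord3_231: "ord3 [2,3,1] x y z \<longleftrightarrow> z < x \<and> x < y"
  unfolding ord3_def all3 by auto
lemma ord3_321: "ord3 [3,2,1] x y z \<longleftrightarrow> z < y \<and> y < x"
  unfolding ord3_def all3 by auto
lemma ord3_132: "ord3 [1,3,2] x y z \<longleftrightarrow> x < z \<and> z < y"
  unfolding ord3_def all3 by auto
lemma ord3_312: "ord3 [3,1,2] x y z \<longleftrightarrow> y < z \<and> z < x"
  unfolding ord3_def all3 by auto

lemma ord3_123': "ord3 [Suc 0, 2, 3] x y z \<longleftrightarrow> x < y \<and> y < z"
  using ord3_123 by simp
lemma ord3_213': "ord3 [2, Suc 0, 3] x y z \<longleftrightarrow> y < x \<and> x < z"
  using ord3_213 by simp
lemma ord3_231': "ord3 [2, 3, Suc 0] x y z \<longleftrightarrow> z < x \<and> x < y"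
  using ord3_231 by simp
lemma ord3_321': "ord3 [3, 2, Suc 0] x y z \<longleftrightarrow> z < y \<and> y < x"
  using ord3_321 by simp
lemma ord3_132': "ord3 [Suc 0, 3, 2] x y z \<longleftrightarrow> x < z \<and> z < y"
  using ord3_132 by simp
lemma ord3_312': "ord3 [3, Suc 0, 2] x y z \<longleftrightarrow> y < z \<and> z < x"
  using ord3_312 by simp

lemma L_elim:
  assumes "cyc_contains (cyc \<sigma>) \<pi> {0}" "length \<pi> = 3"
  shows "\<exists>\<tau>\<in>cyc \<sigma>. \<exists>a p. Suc a < p \<and> p < length \<tau> \<and> ord3 \<pi> (\<tau>!a) (\<tau>!Suc a) (\<tau>!p)"
proof -
  obtain \<tau> where t: "\<tau> \<in> cyc \<sigma>" "vcontains \<tau> \<pi> {0}" using assms(1) cyc_contains_def by auto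
  then obtain f where f: "strict_mono_on {..<3} f" "\<forall>i<3. f i < length \<tau>"
    "\<forall>i<3. \<forall>j<3. (\<tau> ! f i < \<tau> ! f j) \<longleftrightarrow> (\<pi> ! i < \<pi> ! j)"
    "f 1 = Suc (f 0)"
    using assms(2) unfolding vcontains_def by auto
  have "f 1 < f 2" using f(1) unfolding strict_mono_on_def by auto
  moreover have "f 2 < length \<tau>" using f(2) by auto
  moreover have "ord3 \<pi> (\<tau>!f 0) (\<tau>!Suc (f 0)) (\<tau>!f 2)"
    using f(3) f(4) unfolding ord3_def all3 by auto
  ultimately show ?thesis using t(1) f(4) by auto
qed

lemma L_intro:
  assumes "\<tau> \<in> cyc \<sigma>" "Suc a < p" "p < length \<tau>" "ord3 \<pi> (\<tau>!a) (\<tau>!Suc a) (\<tau>!p)" "length \<pi> = 3"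
  shows "cyc_contains (cyc \<sigma>) \<pi> {0}"
proof -
  define f where "f = (\<lambda>j::nat. if j = 0 then a else if j = 1 then Suc a else p)"
  have "strict_mono_on {..<length \<pi>} f" unfolding strict_mono_on_def f_def assms(5)
    using assms(2) by (auto simp: numeral_3_eq_3 less_Suc_eq)
  moreover have "\<forall>i<length \<pi>. f i < length \<tau>" using assms by (auto simp: f_def)
  moreover have "\<forall>i<length \<pi>. \<forall>j<length \<pi>. (\<tau> ! f i < \<tau> ! f j) \<longleftrightarrow> (\<pi> ! i < \<pi> ! j)"
    using assms(4,5) unfolding ord3_def assms(5) all3 by (simp add: f_def)
  moreover have "\<forall>i\<in>{0}. Suc i < length \<pi> \<longrightarrow> f (Suc i) = Suc (f i)" by (simp add: f_def)
  ultimately have "vcontains \<tau> \<pi> {0}" unfolding vcontains_def by blast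
  thus ?thesis using assms(1) cyc_contains_def by auto
qed

lemma cyc_rotate: "cyc (rotate k \<sigma>) = cyc \<sigma>"
proof (cases "\<sigma> = []")
  case True thus ?thesis by simp
next
  case False
  then have n: "length \<sigma> \<ge> 1" by (simp add: Suc_le_eq)
  show ?thesis unfolding cyc_def
  proof (auto simp: rotate_rotate)
    fix m
    have "rotate m \<sigma> = rotate (m + length \<sigma> * k) \<sigma>"
      by (metis mod_mult_self1 rotate_conv_mod mult.commute)
    also have "m + length \<sigma> * k = (m + length \<sigma> * k - k) + k" using n
      by (metis le_add2 le_add_diff_inverse2 le_trans mult_le_mono1 mult_1)
    finally show "\<exists>ka. rotate m \<sigma> = rotate (ka + k) \<sigma>" by blast
  qed
qed

lemma cyc_perm: "\<tau> \<in> cyc \<sigma> \<Longrightarrow> distinct \<tau> = distinct \<sigma> \<and> set \<tau> = set \<sigma> \<and> length \<tau> = length \<sigma>"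
  unfolding cyc_def by auto

lemma local_avoid:
  assumes "distinct \<tau>" "\<not> cyc_contains (cyc \<tau>) \<pi> {0}" "length \<pi> = 3" "Suc i < length \<tau>"
    "c \<in> set \<tau>" "c \<noteq> \<tau>!i" "c \<noteq> \<tau>!Suc i"
  shows "\<not> ord3 \<pi> (\<tau>!i) (\<tau>!Suc i) c"
proof
  assume o: "ord3 \<pi> (\<tau>!i) (\<tau>!Suc i) c"
  obtain q where q: "q < length \<tau>" "\<tau>!q = c" using assms(5) by (metis in_set_conv_nth)
  have qi: "q \<noteq> i" "q \<noteq> Suc i" using q assms(6,7) by auto
  show False
  proof (cases "q > Suc i")
    case True
    have "\<tau> \<in> cyc \<tau>" unfolding cyc_def by (metis (mono_tags) mem_Collect_eq rotate0 id_apply)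
    thus False using L_intro[of \<tau> \<tau> i q \<pi>] True q o assms by auto
  next
    case False
    then have qi2: "q < i" using qi by auto
    let ?r = "rotate i \<tau>"
    have r: "?r = drop i \<tau> @ take i \<tau>" using rotate_drop_take[of i \<tau>] assms(4) by simp
    have "?r \<in> cyc \<tau>" unfolding cyc_def by auto
    moreover have "?r ! 0 = \<tau>!i" "?r ! Suc 0 = \<tau>!Suc i" using assms(4) r by (auto simp: nth_append)
    moreover have "?r ! (length \<tau> - i + q) = \<tau>!q" using assms(4) r qi2 by (auto simp: nth_append)
    moreover have "Suc (Suc 0) \<le> length \<tau> - i + q" "length \<tau> - i + q < length ?r" using assms(4) qi2 by auto
    ultimately show False using L_intro[of ?r \<tau> 0 "length \<tau> - i + q" \<pi>] o q assms(2,3) by auto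
  qed
qed


lemma contains_gen:
  assumes "distinct \<sigma>" "cyc_contains (cyc \<sigma>) \<pi> {0}" "length \<pi> = 3"
  shows "\<exists>j<length \<sigma>. \<exists>c\<in>set \<sigma>. c \<noteq> \<sigma>!j \<and> c \<noteq> \<sigma>!(Suc j mod length \<sigma>)
           \<and> ord3 \<pi> (\<sigma>!j) (\<sigma>!(Suc j mod length \<sigma>)) c"
proof -
  obtain \<tau> a p where t: "\<tau> \<in> cyc \<sigma>" "Suc a < p" "p < length \<tau>" "ord3 \<pi> (\<tau>!a) (\<tau>!Suc a) (\<tau>!p)"
    using L_elim[OF assms(2,3)] by blast
  obtain k where k: "\<tau> = rotate k \<sigma>" using t(1) unfolding cyc_def by auto
  have len: "length \<tau> = length \<sigma>" using k by simp
  define j where "j = (k + a) mod length \<sigma>"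
  have "length \<sigma> > 0" using t len by auto
  then have j: "j < length \<sigma>" unfolding j_def by simp
  have 1: "\<tau>!a = \<sigma>!j" using k t len by (simp add: nth_rotate j_def)
  have 2: "\<tau>!Suc a = \<sigma>!(Suc j mod length \<sigma>)" using k t len
    by (simp add: nth_rotate j_def mod_Suc_eq)
  have dt: "distinct \<tau>" using k assms(1) by simp
  have 3: "\<tau>!p \<noteq> \<tau>!a" "\<tau>!p \<noteq> \<tau>!Suc a" using dt t by (auto simp: nth_eq_iff_index_eq)
  have 4: "\<tau>!p \<in> set \<sigma>" using t k by (metis nth_mem set_rotate)
  show ?thesis using j 1 2 3 4 t(4) by metis
qed

lemma D_nth: "j < n \<Longrightarrow> rev [1..<Suc n] ! j = n - j"
  by (simp add: rev_nth del: upt_Suc)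

lemma I_nth: "j < n \<Longrightarrow> [1..<Suc n] ! j = Suc j"
  by (simp del: upt_Suc)

lemma D_perm: "rev [1..<Suc n] \<in> perms n"
  unfolding perms_def by auto

lemma I_perm: "[1..<Suc n] \<in> perms n"
  unfolding perms_def by auto

lemma contains_D:
  assumes "cyc_contains (cyc (rev [1..<Suc n])) \<pi> {0}" "length \<pi> = 3"
  shows "\<exists>x c. c \<in> {1..n} \<and> ((2 \<le> x \<and> x \<le> n \<and> c \<noteq> x \<and> c \<noteq> x - 1 \<and> ord3 \<pi> x (x-1) c)
     \<or> (c \<noteq> 1 \<and> c \<noteq> n \<and> ord3 \<pi> 1 n c))"
proof -
  have dD: "distinct (rev [1..<Suc n])" "length (rev [1..<Suc n]) = n" "set (rev [1..<Suc n]) = {1..n}" by auto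
  obtain j c where jc: "j < n" "c \<in> {1..n}" "c \<noteq> rev [1..<Suc n]!j"
    "c \<noteq> rev [1..<Suc n]!(Suc j mod n)" "ord3 \<pi> (rev [1..<Suc n]!j) (rev [1..<Suc n]!(Suc j mod n)) c"
    using contains_gen[OF dD(1) assms] unfolding dD(2,3) by blast
  show ?thesis
  proof (cases "Suc j < n")
    case True
    then have y: "rev [1..<Suc n]!(Suc j mod n) = (n - j) - 1" using D_nth by simp
    have x: "rev [1..<Suc n]!j = n - j" using D_nth jc by simp
    have "2 \<le> n - j \<and> n - j \<le> n \<and> c \<noteq> n - j \<and> c \<noteq> (n - j) - 1 \<and> ord3 \<pi> (n - j) ((n - j) - 1) c"
      using jc(3,4,5) True unfolding x y by simp
    thus ?thesis using jc(2) by blast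
  next
    case False
    then have "Suc j = n" using jc by simp
    then have y: "rev [1..<Suc n]!(Suc j mod n) = n" and x: "rev [1..<Suc n]!j = 1" using D_nth jc by auto
    have "c \<noteq> 1 \<and> c \<noteq> n \<and> ord3 \<pi> 1 n c" using jc(3,4,5) unfolding x y by simp
    thus ?thesis using jc(2) by blast
  qed
qed

lemma contains_I:
  assumes "cyc_contains (cyc [1..<Suc n]) \<pi> {0}" "length \<pi> = 3"
  shows "\<exists>x c. c \<in> {1..n} \<and> ((1 \<le> x \<and> x < n \<and> c \<noteq> x \<and> c \<noteq> x + 1 \<and> ord3 \<pi> x (x+1) c)
     \<or> (c \<noteq> 1 \<and> c \<noteq> n \<and> ord3 \<pi> n 1 c))"
proof -
  have dD: "distinct [1..<Suc n]" "length [1..<Suc n] = n" "set [1..<Suc n] = {1..n}" by auto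
  obtain j c where jc: "j < n" "c \<in> {1..n}" "c \<noteq> [1..<Suc n]!j"
    "c \<noteq> [1..<Suc n]!(Suc j mod n)" "ord3 \<pi> ([1..<Suc n]!j) ([1..<Suc n]!(Suc j mod n)) c"
    using contains_gen[OF dD(1) assms] unfolding dD(2,3) by blast
  show ?thesis
  proof (cases "Suc j < n")
    case True
    then have y: "[1..<Suc n]!(Suc j mod n) = Suc j + 1" and x: "[1..<Suc n]!j = Suc j" using jc I_nth by auto
    have "1 \<le> Suc j \<and> Suc j < n \<and> c \<noteq> Suc j \<and> c \<noteq> Suc j + 1 \<and> ord3 \<pi> (Suc j) (Suc j + 1) c"
      using jc(3,4,5) True unfolding x y by simp
    thus ?thesis using jc(2) by blast
  next
    case False
    then have "Suc j = n" using jc by simp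
    then have y: "[1..<Suc n]!(Suc j mod n) = 1" and x: "[1..<Suc n]!j = n" using jc I_nth by auto
    have "c \<noteq> 1 \<and> c \<noteq> n \<and> ord3 \<pi> n 1 c" using jc(3,4,5) unfolding x y by simp
    thus ?thesis using jc(2) by blast
  qed
qed

lemma perm_rot:
  assumes "\<sigma> \<in> perms n" "\<tau> \<in> cyc \<sigma>"
  shows "distinct \<tau> \<and> set \<tau> = {1..n} \<and> length \<tau> = n \<and> cyc \<tau> = cyc \<sigma>"
proof -
  obtain k where k: "\<tau> = rotate k \<sigma>" using assms(2) unfolding cyc_def by auto
  have "length \<sigma> = n" using assms(1) unfolding perms_def by (metis (mono_tags) card_atLeastAtMost diff_Suc_1 distinct_card mem_Collect_eq)
  thus ?thesis using assms(1) k cyc_rotate unfolding perms_def by auto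
qed

lemma rot_first:
  assumes "x \<in> set \<sigma>" shows "\<exists>\<tau>\<in>cyc \<sigma>. \<tau>!0 = x"
proof -
  obtain j where j: "j < length \<sigma>" "\<sigma>!j = x" using assms by (metis in_set_conv_nth)
  have "0 < length \<sigma>" using j by auto
  then have "rotate j \<sigma> ! 0 = x" using j by (simp add: nth_rotate)
  thus ?thesis unfolding cyc_def by auto
qed

lemma rot_last:
  assumes "x \<in> set \<sigma>" shows "\<exists>\<tau>\<in>cyc \<sigma>. \<tau>!(length \<sigma> - 1) = x"
proof -
  obtain j where j: "j < length \<sigma>" "\<sigma>!j = x" using assms by (metis in_set_conv_nth)
  have "(Suc j + (length \<sigma> - 1)) mod length \<sigma> = j" using j
  proof -
    have "Suc j + (length \<sigma> - 1) = j + length \<sigma>" using j by auto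
    thus ?thesis using j by simp
  qed
  moreover have "rotate (Suc j) \<sigma> ! (length \<sigma> - 1) = \<sigma>!((Suc j + (length \<sigma> - 1)) mod length \<sigma>)"
    by (rule nth_rotate) (use j in auto)
  ultimately have "rotate (Suc j) \<sigma> ! (length \<sigma> - 1) = x" using j by simp
  moreover have "rotate (Suc j) \<sigma> \<in> cyc \<sigma>" unfolding cyc_def by blast
  ultimately show ?thesis by blast
qed

lemma asc_I:
  assumes "distinct \<tau>" "set \<tau> = {1..n}" "\<forall>i. Suc i < length \<tau> \<longrightarrow> \<tau>!i < \<tau>!Suc i"
  shows "\<tau> = [1..<Suc n]"
proof -
  have "sorted \<tau>" using assms(3) by (simp add: sorted_iff_nth_Suc less_imp_le)
  thus ?thesis using assms(1,2) sorted_distinct_set_unique[of \<tau> "[1..<Suc n]"] by (auto simp: atLeastLessThanSuc_atLeastAtMost)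
qed

lemma desc_D:
  assumes "distinct \<tau>" "set \<tau> = {1..n}" "\<forall>i. Suc i < length \<tau> \<longrightarrow> \<tau>!Suc i < \<tau>!i"
  shows "\<tau> = rev [1..<Suc n]"
proof -
  have "\<forall>i. Suc i < length (rev \<tau>) \<longrightarrow> rev \<tau>!i < rev \<tau>!Suc i"
  proof (intro allI impI)
    fix i assume i: "Suc i < length (rev \<tau>)"
    have "rev \<tau>!i = \<tau>!Suc (length \<tau> - Suc (Suc i))" "rev \<tau>!Suc i = \<tau>!(length \<tau> - Suc (Suc i))"
      using i by (auto simp: rev_nth Suc_diff_Suc)
    thus "rev \<tau>!i < rev \<tau>!Suc i" using assms(3) i by auto
  qed
  then have "rev \<tau> = [1..<Suc n]" using asc_I[of "rev \<tau>" n] assms by auto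
  thus ?thesis by (metis rev_rev_ident)
qed


lemma Av_single:
  assumes "\<sigma>0 \<in> perms n" "\<not> cyc_contains (cyc \<sigma>0) \<pi> {0}"
    "\<And>\<sigma>. \<sigma> \<in> perms n \<Longrightarrow> \<not> cyc_contains (cyc \<sigma>) \<pi> {0} \<Longrightarrow> cyc \<sigma> = cyc \<sigma>0"
  shows "card (Av n \<pi> {0}) = 1"
proof -
  have "Av n \<pi> {0} = {cyc \<sigma>0}"
  proof
    show "Av n \<pi> {0} \<subseteq> {cyc \<sigma>0}"
    proof
      fix C assume "C \<in> Av n \<pi> {0}"
      then obtain \<sigma> where s: "\<sigma> \<in> perms n" "C = cyc \<sigma>" "\<not> cyc_contains C \<pi> {0}"
        unfolding Av_def cyc_perms_def by blast
      thus "C \<in> {cyc \<sigma>0}" using assms(3)[OF s(1)] by simp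
    qed
    show "{cyc \<sigma>0} \<subseteq> Av n \<pi> {0}" using assms(1,2) unfolding Av_def cyc_perms_def by blast
  qed
  thus ?thesis by simp
qed

lemma avA: "\<not> cyc_contains (cyc (rev [1..<Suc n])) [1,2,3] {0}"
proof
  assume h: "cyc_contains (cyc (rev [1..<Suc n])) [1,2,3] {0}"
  obtain x c where "c \<in> {1..n}" "(2 \<le> x \<and> x \<le> n \<and> c \<noteq> x \<and> c \<noteq> x - 1 \<and> ord3 [1,2,3] x (x-1) c) \<or> (c \<noteq> 1 \<and> c \<noteq> n \<and> ord3 [1,2,3] 1 n c)"
    using contains_D[OF h] by auto
  thus False unfolding ord3_123 atLeastAtMost_iff by (elim disjE conjE) linarith+
qed
lemma avB: "\<not> cyc_contains (cyc [1..<Suc n]) [2,1,3] {0}"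
proof
  assume h: "cyc_contains (cyc [1..<Suc n]) [2,1,3] {0}"
  obtain x c where "c \<in> {1..n}" "(1 \<le> x \<and> x < n \<and> c \<noteq> x \<and> c \<noteq> x + 1 \<and> ord3 [2,1,3] x (x+1) c) \<or> (c \<noteq> 1 \<and> c \<noteq> n \<and> ord3 [2,1,3] n 1 c)"
    using contains_I[OF h] by auto
  thus False unfolding ord3_213 atLeastAtMost_iff by (elim disjE conjE) linarith+
qed
lemma avC: "\<not> cyc_contains (cyc (rev [1..<Suc n])) [2,3,1] {0}"
proof
  assume h: "cyc_contains (cyc (rev [1..<Suc n])) [2,3,1] {0}"
  obtain x c where "c \<in> {1..n}" "(2 \<le> x \<and> x \<le> n \<and> c \<noteq> x \<and> c \<noteq> x - 1 \<and> ord3 [2,3,1] x (x-1) c) \<or> (c \<noteq> 1 \<and> c \<noteq> n \<and> ord3 [2,3,1] 1 n c)"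
    using contains_D[OF h] by auto
  thus False unfolding ord3_231 atLeastAtMost_iff by (elim disjE conjE) linarith+
qed
lemma avD: "\<not> cyc_contains (cyc [1..<Suc n]) [3,2,1] {0}"
proof
  assume h: "cyc_contains (cyc [1..<Suc n]) [3,2,1] {0}"
  obtain x c where "c \<in> {1..n}" "(1 \<le> x \<and> x < n \<and> c \<noteq> x \<and> c \<noteq> x + 1 \<and> ord3 [3,2,1] x (x+1) c) \<or> (c \<noteq> 1 \<and> c \<noteq> n \<and> ord3 [3,2,1] n 1 c)"
    using contains_I[OF h] by auto
  thus False unfolding ord3_321 atLeastAtMost_iff by (elim disjE conjE) linarith+
qed
lemma avE: "\<not> cyc_contains (cyc [1..<Suc n]) [1,3,2] {0}"
proof
  assume h: "cyc_contains (cyc [1..<Suc n]) [1,3,2] {0}"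
  obtain x c where "c \<in> {1..n}" "(1 \<le> x \<and> x < n \<and> c \<noteq> x \<and> c \<noteq> x + 1 \<and> ord3 [1,3,2] x (x+1) c) \<or> (c \<noteq> 1 \<and> c \<noteq> n \<and> ord3 [1,3,2] n 1 c)"
    using contains_I[OF h] by auto
  thus False unfolding ord3_132 atLeastAtMost_iff by (elim disjE conjE) linarith+
qed
lemma avF: "\<not> cyc_contains (cyc (rev [1..<Suc n])) [3,1,2] {0}"
proof
  assume h: "cyc_contains (cyc (rev [1..<Suc n])) [3,1,2] {0}"
  obtain x c where "c \<in> {1..n}" "(2 \<le> x \<and> x \<le> n \<and> c \<noteq> x \<and> c \<noteq> x - 1 \<and> ord3 [3,1,2] x (x-1) c) \<or> (c \<noteq> 1 \<and> c \<noteq> n \<and> ord3 [3,1,2] 1 n c)"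
    using contains_D[OF h] by auto
  thus False unfolding ord3_312 atLeastAtMost_iff by (elim disjE conjE) linarith+
qed

lemma unA:
  assumes "\<sigma> \<in> perms n" "n \<ge> 1" "\<not> cyc_contains (cyc \<sigma>) [1,2,3] {0}"
  shows "cyc \<sigma> = cyc (rev [1..<Suc n])"
proof -
  have "n \<in> set \<sigma>" using assms unfolding perms_def by auto
  then obtain \<tau> where t: "\<tau> \<in> cyc \<sigma>" "\<tau>!0 = n" using rot_first by blast
  have P: "distinct \<tau>" "set \<tau> = {1..n}" "length \<tau> = n" "cyc \<tau> = cyc \<sigma>" using perm_rot[OF assms(1) t(1)] by auto
  have av: "\<And>i c. Suc i < length \<tau> \<Longrightarrow> c \<in> set \<tau> \<Longrightarrow> c \<noteq> \<tau>!i \<Longrightarrow> c \<noteq> \<tau>!Suc i \<Longrightarrow> \<not> ord3 [1,2,3] (\<tau>!i) (\<tau>!Suc i) c"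
    using local_avoid[OF P(1)] assms(3) P(4) by auto
  have "\<forall>i. Suc i < length \<tau> \<longrightarrow> \<tau>!Suc i < \<tau>!i"
  proof (intro allI impI)
    fix i assume i: "Suc i < length \<tau>"
    have "\<tau> \<noteq> []" using i by auto
    have ne: "\<tau>!Suc i \<noteq> n" "\<tau>!Suc i \<noteq> \<tau>!i" using nth_eq_iff_index_eq[OF P(1), of "Suc i" 0] nth_eq_iff_index_eq[OF P(1), of "Suc i" i] t(2) i \<open>\<tau> \<noteq> []\<close> by (auto simp del: nth_eq_iff_index_eq)
    have r: "\<tau>!Suc i \<in> {1..n}" "\<tau>!i \<in> {1..n}" using P(2) i by (metis Suc_lessD nth_mem)+
    show "\<tau>!Suc i < \<tau>!i"
    proof (rule ccontr)
      assume "\<not> ?thesis"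
      then have "\<tau>!i < \<tau>!Suc i" using ne by auto
      moreover have "n \<in> set \<tau>" using P(2) assms(2) by auto
      ultimately show False using av[OF i, of n] ne r by (auto simp: ord3_123 ord3_123')
    qed
  qed
  then have "\<tau> = rev [1..<Suc n]" using desc_D P by auto
  thus ?thesis using P by simp
qed

lemma unC:
  assumes "\<sigma> \<in> perms n" "n \<ge> 1" "\<not> cyc_contains (cyc \<sigma>) [2,3,1] {0}"
  shows "cyc \<sigma> = cyc (rev [1..<Suc n])"
proof -
  have "1 \<in> set \<sigma>" using assms unfolding perms_def by auto
  then obtain \<tau> where t: "\<tau> \<in> cyc \<sigma>" "\<tau>!(length \<sigma> - 1) = 1" using rot_last by blast
  have P: "distinct \<tau>" "set \<tau> = {1..n}" "length \<tau> = n" "cyc \<tau> = cyc \<sigma>" using perm_rot[OF assms(1) t(1)] by auto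
  have t2: "\<tau>!(n - 1) = 1" using t(2) cyc_perm[OF t(1)] P(3) by simp
  have av: "\<And>i c. Suc i < length \<tau> \<Longrightarrow> c \<in> set \<tau> \<Longrightarrow> c \<noteq> \<tau>!i \<Longrightarrow> c \<noteq> \<tau>!Suc i \<Longrightarrow> \<not> ord3 [2,3,1] (\<tau>!i) (\<tau>!Suc i) c"
    using local_avoid[OF P(1)] assms(3) P(4) by auto
  have "\<forall>i. Suc i < length \<tau> \<longrightarrow> \<tau>!Suc i < \<tau>!i"
  proof (intro allI impI)
    fix i assume i: "Suc i < length \<tau>"
    have ne: "\<tau>!i \<noteq> 1" "\<tau>!Suc i \<noteq> \<tau>!i" using nth_eq_iff_index_eq[OF P(1), of i "n - 1"] nth_eq_iff_index_eq[OF P(1), of "Suc i" i] P(3) t2 i by auto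
    have r: "\<tau>!Suc i \<in> {1..n}" "\<tau>!i \<in> {1..n}" using P(2) i by (metis Suc_lessD nth_mem)+
    show "\<tau>!Suc i < \<tau>!i"
    proof (rule ccontr)
      assume "\<not> ?thesis"
      then have "\<tau>!i < \<tau>!Suc i" using ne by auto
      moreover have "1 \<in> set \<tau>" using P(2) assms(2) by auto
      ultimately show False using av[OF i, of 1] ne r by (auto simp: ord3_231 ord3_231')
    qed
  qed
  then have "\<tau> = rev [1..<Suc n]" using desc_D P by auto
  thus ?thesis using P by simp
qed

lemma unB:
  assumes "\<sigma> \<in> perms n" "n \<ge> 1" "\<not> cyc_contains (cyc \<sigma>) [2,1,3] {0}"
  shows "cyc \<sigma> = cyc [1..<Suc n]"
proof -
  have "n \<in> set \<sigma>" using assms unfolding perms_def by auto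
  then obtain \<tau> where t: "\<tau> \<in> cyc \<sigma>" "\<tau>!(length \<sigma> - 1) = n" using rot_last by blast
  have P: "distinct \<tau>" "set \<tau> = {1..n}" "length \<tau> = n" "cyc \<tau> = cyc \<sigma>" using perm_rot[OF assms(1) t(1)] by auto
  have t2: "\<tau>!(n - 1) = n" using t(2) cyc_perm[OF t(1)] P(3) by simp
  have av: "\<And>i c. Suc i < length \<tau> \<Longrightarrow> c \<in> set \<tau> \<Longrightarrow> c \<noteq> \<tau>!i \<Longrightarrow> c \<noteq> \<tau>!Suc i \<Longrightarrow> \<not> ord3 [2,1,3] (\<tau>!i) (\<tau>!Suc i) c"
    using local_avoid[OF P(1)] assms(3) P(4) by auto
  have "\<forall>i. Suc i < length \<tau> \<longrightarrow> \<tau>!i < \<tau>!Suc i"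
  proof (intro allI impI)
    fix i assume i: "Suc i < length \<tau>"
    have ne: "\<tau>!i \<noteq> n" "\<tau>!Suc i \<noteq> \<tau>!i" using nth_eq_iff_index_eq[OF P(1), of i "n - 1"] nth_eq_iff_index_eq[OF P(1), of "Suc i" i] P(3) t2 i by auto
    have r: "\<tau>!Suc i \<in> {1..n}" "\<tau>!i \<in> {1..n}" using P(2) i by (metis Suc_lessD nth_mem)+
    show "\<tau>!i < \<tau>!Suc i"
    proof (rule ccontr)
      assume "\<not> ?thesis"
      then have "\<tau>!Suc i < \<tau>!i" using ne by auto
      moreover have "n \<in> set \<tau>" using P(2) assms(2) by auto
      ultimately show False using av[OF i, of n] ne r by (auto simp: ord3_213 ord3_213')
    qed
  qed
  then have "\<tau> = [1..<Suc n]" using asc_I P by auto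
  thus ?thesis using P by simp
qed

lemma unD:
  assumes "\<sigma> \<in> perms n" "n \<ge> 1" "\<not> cyc_contains (cyc \<sigma>) [3,2,1] {0}"
  shows "cyc \<sigma> = cyc [1..<Suc n]"
proof -
  have "1 \<in> set \<sigma>" using assms unfolding perms_def by auto
  then obtain \<tau> where t: "\<tau> \<in> cyc \<sigma>" "\<tau>!0 = 1" using rot_first by blast
  have P: "distinct \<tau>" "set \<tau> = {1..n}" "length \<tau> = n" "cyc \<tau> = cyc \<sigma>" using perm_rot[OF assms(1) t(1)] by auto
  have av: "\<And>i c. Suc i < length \<tau> \<Longrightarrow> c \<in> set \<tau> \<Longrightarrow> c \<noteq> \<tau>!i \<Longrightarrow> c \<noteq> \<tau>!Suc i \<Longrightarrow> \<not> ord3 [3,2,1] (\<tau>!i) (\<tau>!Suc i) c"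
    using local_avoid[OF P(1)] assms(3) P(4) by auto
  have "\<forall>i. Suc i < length \<tau> \<longrightarrow> \<tau>!i < \<tau>!Suc i"
  proof (intro allI impI)
    fix i assume i: "Suc i < length \<tau>"
    have "\<tau> \<noteq> []" using i by auto
    have ne: "\<tau>!Suc i \<noteq> 1" "\<tau>!Suc i \<noteq> \<tau>!i" using nth_eq_iff_index_eq[OF P(1), of "Suc i" 0] nth_eq_iff_index_eq[OF P(1), of "Suc i" i] t(2) i \<open>\<tau> \<noteq> []\<close> by (auto simp del: nth_eq_iff_index_eq)
    have r: "\<tau>!Suc i \<in> {1..n}" "\<tau>!i \<in> {1..n}" using P(2) i by (metis Suc_lessD nth_mem)+
    show "\<tau>!i < \<tau>!Suc i"
    proof (rule ccontr)
      assume "\<not> ?thesis"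
      then have "\<tau>!Suc i < \<tau>!i" using ne by auto
      moreover have "1 \<in> set \<tau>" using P(2) assms(2) by auto
      ultimately show False using av[OF i, of 1] ne r by (auto simp: ord3_321 ord3_321')
    qed
  qed
  then have "\<tau> = [1..<Suc n]" using asc_I P by auto
  thus ?thesis using P by simp
qed


lemma unE:
  assumes "\<sigma> \<in> perms n" "n \<ge> 1" "\<not> cyc_contains (cyc \<sigma>) [1,3,2] {0}"
  shows "cyc \<sigma> = cyc [1..<Suc n]"
proof -
  have "1 \<in> set \<sigma>" using assms unfolding perms_def by auto
  then obtain \<tau> where t: "\<tau> \<in> cyc \<sigma>" "\<tau>!0 = 1" using rot_first by blast
  have P: "distinct \<tau>" "set \<tau> = {1..n}" "length \<tau> = n" "cyc \<tau> = cyc \<sigma>" using perm_rot[OF assms(1) t(1)] by auto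
  have av: "\<And>i c. Suc i < length \<tau> \<Longrightarrow> c \<in> set \<tau> \<Longrightarrow> c \<noteq> \<tau>!i \<Longrightarrow> c \<noteq> \<tau>!Suc i \<Longrightarrow> \<not> ord3 [1,3,2] (\<tau>!i) (\<tau>!Suc i) c"
    using local_avoid[OF P(1)] assms(3) P(4) by auto
  have key: "\<And>i. i < n \<Longrightarrow> \<tau>!i = Suc i"
  proof -
    fix i show "i < n \<Longrightarrow> \<tau>!i = Suc i"
    proof (induction i rule: less_induct)
      case (less i)
      show ?case
      proof (cases i)
        case 0 then show ?thesis using t(2) by simp
      next
        case (Suc k)
        have IH: "\<tau>!j = Suc j" if "j \<le> k" for j
        proof -
          have "j < i" "j < n" using that Suc less.prems by auto
          thus ?thesis using less.IH by blast
        qed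
        have il: "i < length \<tau>" using less.prems P(3) by simp
        have r: "\<tau>!i \<in> {1..n}" using P(2) il nth_mem by blast
        have gt: "\<tau>!i > Suc k"
        proof (rule ccontr)
          assume a: "\<not> ?thesis"
          define j where "j = \<tau>!i - 1"
          have j: "j \<le> k" "Suc j = \<tau>!i" using a r unfolding j_def by auto
          have "\<tau>!j = \<tau>!i" using IH[OF j(1)] j(2) by simp
          moreover have "j < length \<tau>" using j(1) Suc il by simp
          ultimately have "j = i" using nth_eq_iff_index_eq[OF P(1)] il by blast
          thus False using j Suc by simp
        qed
        show ?thesis
        proof (rule ccontr)
          assume ne: "\<tau>!i \<noteq> Suc i"
          have c1: "Suc i \<in> set \<tau>" using P(2) less.prems by auto
          have c2: "Suc i \<noteq> \<tau>!k" using IH[of k] Suc by simp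
          have c3: "Suc i \<noteq> \<tau>!Suc k" using ne Suc by simp
          have sk: "Suc k < length \<tau>" using il Suc by simp
          have "ord3 [1,3,2] (\<tau>!k) (\<tau>!Suc k) (Suc i)"
            unfolding ord3_132 using IH[of k] gt ne Suc by simp
          thus False using av[OF sk c1 c2 c3] by blast
        qed
      qed
    qed
  qed
  have "\<tau> = [1..<Suc n]" by (rule nth_equalityI) (auto simp: P(3) key I_nth)
  thus ?thesis using P by simp
qed

lemma unF:
  assumes "\<sigma> \<in> perms n" "n \<ge> 1" "\<not> cyc_contains (cyc \<sigma>) [3,1,2] {0}"
  shows "cyc \<sigma> = cyc (rev [1..<Suc n])"
proof -
  have "n \<in> set \<sigma>" using assms unfolding perms_def by auto
  then obtain \<tau> where t: "\<tau> \<in> cyc \<sigma>" "\<tau>!0 = n" using rot_first by blast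
  have P: "distinct \<tau>" "set \<tau> = {1..n}" "length \<tau> = n" "cyc \<tau> = cyc \<sigma>" using perm_rot[OF assms(1) t(1)] by auto
  have av: "\<And>i c. Suc i < length \<tau> \<Longrightarrow> c \<in> set \<tau> \<Longrightarrow> c \<noteq> \<tau>!i \<Longrightarrow> c \<noteq> \<tau>!Suc i \<Longrightarrow> \<not> ord3 [3,1,2] (\<tau>!i) (\<tau>!Suc i) c"
    using local_avoid[OF P(1)] assms(3) P(4) by auto
  have key: "\<And>i. i < n \<Longrightarrow> \<tau>!i = n - i"
  proof -
    fix i show "i < n \<Longrightarrow> \<tau>!i = n - i"
    proof (induction i rule: less_induct)
      case (less i)
      show ?case
      proof (cases i)
        case 0 then show ?thesis using t(2) by simp
      next
        case (Suc k)
        have IH: "\<tau>!j = n - j" if "j \<le> k" for j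
        proof -
          have "j < i" "j < n" using that Suc less.prems by auto
          thus ?thesis using less.IH by blast
        qed
        have il: "i < length \<tau>" using less.prems P(3) by simp
        have r: "\<tau>!i \<in> {1..n}" using P(2) il nth_mem by blast
        have lt: "\<tau>!i < n - k"
        proof (rule ccontr)
          assume a: "\<not> ?thesis"
          define j where "j = n - \<tau>!i"
          have j: "j \<le> k" "n - j = \<tau>!i" using a r unfolding j_def by auto
          have "\<tau>!j = \<tau>!i" using IH[OF j(1)] j(2) by simp
          moreover have "j < length \<tau>" using j(1) Suc il by simp
          ultimately have "j = i" using nth_eq_iff_index_eq[OF P(1)] il by blast
          thus False using j Suc by simp
        qed
        show ?thesis
        proof (rule ccontr)
          assume ne: "\<tau>!i \<noteq> n - i"
          have c1: "n - i \<in> set \<tau>" using P(2) less.prems by auto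
          have c2: "n - i \<noteq> \<tau>!k" using IH[of k] Suc less.prems by simp
          have c3: "n - i \<noteq> \<tau>!Suc k" using ne Suc by simp
          have sk: "Suc k < length \<tau>" using il Suc by simp
          have "ord3 [3,1,2] (\<tau>!k) (\<tau>!Suc k) (n - i)"
            unfolding ord3_312 using IH[of k] lt ne Suc less.prems by (simp; presburger)
          thus False using av[OF sk c1 c2 c3] by blast
        qed
      qed
    qed
  qed
  have k2: "\<And>i. i < length \<tau> \<Longrightarrow> \<tau>!i = rev [1..<Suc n] ! i" using key D_nth P(3) by metis
  have "\<tau> = rev [1..<Suc n]" by (rule nth_equalityI) (use P(3) k2 in auto)
  thus ?thesis using P by simp
qed

theorem theorem3p2:
  fixes \<pi> :: "nat list" and n :: nat
  assumes "\<pi> \<in> {[1,2,3], [2,1,3], [2,3,1], [3,2,1], [1,3,2], [3,1,2]}"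
    and "n \<ge> 1"
  shows "card (Av n \<pi> {0}) = 1"
  using assms(1)
proof (elim insertE emptyE)
  assume "\<pi> = [1,2,3]" thus ?thesis using Av_single[OF D_perm avA unA[OF _ assms(2)]] by simp
next
  assume "\<pi> = [2,1,3]" thus ?thesis using Av_single[OF I_perm avB unB[OF _ assms(2)]] by simp
next
  assume "\<pi> = [2,3,1]" thus ?thesis using Av_single[OF D_perm avC unC[OF _ assms(2)]] by simp
next
  assume "\<pi> = [3,2,1]" thus ?thesis using Av_single[OF I_perm avD unD[OF _ assms(2)]] by simp
next
  assume "\<pi> = [1,3,2]" thus ?thesis using Av_single[OF I_perm avE unE[OF _ assms(2)]] by simp
next
  assume "\<pi> = [3,1,2]" thus ?thesis using Av_single[OF D_perm avF unF[OF _ assms(2)]] by simp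
qed

end
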